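(* If $G$ is a finite nonabelian group, then $K(G)\le G'$.
   Context: For $\chi\in\mathrm{Irr}(G)$, the center of $\chi$ is $Z(\chi)=\{g\in G : |\chi(g)|=\chi(1)\}$. For a nonabelian group $G$, let $\mathcal{X}=\{\chi\in\mathrm{Irr}(G) : Z(\chi)>Z(G)\}$ (strict containment) and define $K(G)=\bigcap_{\chi\in\mathcal{X}}\ker(\chi)$. *)

theory Defs
  imports "HOL-Algebra.Generated_Groups" "Jordan_Normal_Form.Matrix"
begin

definition grp_center :: "('a, 'b) monoid_scheme \<Rightarrow> 'a set" where
  "grp_center G = {z \<in> carrier G. \<forall>g \<in> carrier G. z \<otimes>\<^bsub>G\<^esub> g = g \<otimes>\<^bsub>G\<^esub> z}"

definition is_rep :: "('a, 'b) monoid_scheme \<Rightarrow> nat \<Rightarrow> ('a \<Rightarrow> complex mat) \<Rightarrow> bool" where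
  "is_rep G n \<rho> \<longleftrightarrow>
     (\<forall>g \<in> carrier G. \<rho> g \<in> carrier_mat n n) \<and>
     \<rho> \<one>\<^bsub>G\<^esub> = 1\<^sub>m n \<and>
     (\<forall>g \<in> carrier G. \<forall>h \<in> carrier G. \<rho> (g \<otimes>\<^bsub>G\<^esub> h) = \<rho> g * \<rho> h)"

definition invariant_subspace :: "('a, 'b) monoid_scheme \<Rightarrow> nat \<Rightarrow> ('a \<Rightarrow> complex mat) \<Rightarrow> complex vec set \<Rightarrow> bool" where
  "invariant_subspace G n \<rho> W \<longleftrightarrow>
     W \<subseteq> carrier_vec n \<and> 0\<^sub>v n \<in> W \<and>
     (\<forall>v \<in> W. \<forall>w \<in> W. v + w \<in> W) \<and>
     (\<forall>c. \<forall>v \<in> W. c \<cdot>\<^sub>v v \<in> W) \<and>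
     (\<forall>g \<in> carrier G. \<forall>v \<in> W. \<rho> g *\<^sub>v v \<in> W)"

definition irreducible_rep :: "('a, 'b) monoid_scheme \<Rightarrow> nat \<Rightarrow> ('a \<Rightarrow> complex mat) \<Rightarrow> bool" where
  "irreducible_rep G n \<rho> \<longleftrightarrow> is_rep G n \<rho> \<and> n > 0 \<and>
     (\<forall>W. invariant_subspace G n \<rho> W \<longrightarrow> W = {0\<^sub>v n} \<or> W = carrier_vec n)"

definition mat_trace :: "complex mat \<Rightarrow> complex" where
  "mat_trace A = (\<Sum>i<dim_row A. A $$ (i, i))"

definition Irr :: "('a, 'b) monoid_scheme \<Rightarrow> ('a \<Rightarrow> complex) set" where
  "Irr G = {\<chi>. \<exists>n \<rho>. irreducible_rep G n \<rho> \<and>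
              \<chi> = (\<lambda>g. if g \<in> carrier G then mat_trace (\<rho> g) else 0)}"

definition char_center :: "('a, 'b) monoid_scheme \<Rightarrow> ('a \<Rightarrow> complex) \<Rightarrow> 'a set" where
  "char_center G \<chi> = {g \<in> carrier G. cmod (\<chi> g) = cmod (\<chi> \<one>\<^bsub>G\<^esub>)}"

definition char_ker :: "('a, 'b) monoid_scheme \<Rightarrow> ('a \<Rightarrow> complex) \<Rightarrow> 'a set" where
  "char_ker G \<chi> = {g \<in> carrier G. \<chi> g = \<chi> \<one>\<^bsub>G\<^esub>}"

text \<open>K(G): intersection of kernels of irreducible characters chi with Z(chi) > Z(G)
  (an empty intersection is read as G).\<close>
definition K_grp :: "('a, 'b) monoid_scheme \<Rightarrow> 'a set" where
  "K_grp G = carrier G \<inter> (\<Inter>\<chi> \<in> {\<chi> \<in> Irr G. grp_center G \<subset> char_center G \<chi>}. char_ker G \<chi>)"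

end

theory Submission
  imports Defs "HOL-Algebra.Multiplicative_Group"
begin

definition pchar :: "('a,'b) monoid_scheme \<Rightarrow> 'a set \<Rightarrow> ('a \<Rightarrow> complex) \<Rightarrow> bool" where
 "pchar A H \<chi> \<longleftrightarrow> subgroup H A \<and> (\<forall>x\<in>H. \<forall>y\<in>H. \<chi> (x \<otimes>\<^bsub>A\<^esub> y) = \<chi> x * \<chi> y) \<and> (\<forall>x\<in>H. \<chi> x \<noteq> 0)"

lemma complex_root_exists:
  fixes z :: complex assumes "0 < n" shows "\<exists>w. w ^ n = z"
proof -
  have "rcis (root n (cmod z)) (Arg z / real n) ^ n = rcis (root n (cmod z) ^ n) (real n * (Arg z / real n))"
    by (rule DeMoivre2)
  also have "\<dots> = rcis (cmod z) (Arg z)" using assms by simp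
  also have "\<dots> = z" by (simp add: rcis_cmod_Arg)
  finally show ?thesis by blast
qed

lemma (in group) subgroup_nat_pow_closed:
  assumes "subgroup H G" "c \<in> H" shows "c [^] (n::nat) \<in> H"
proof (induction n)
  case 0 then show ?case using assms subgroup.one_closed by simp
next
  case (Suc n)
  have "c [^] Suc n = c [^] n \<otimes> c" using assms subgroup.subset by (simp add: nat_pow_Suc)
  then show ?case using Suc assms subgroup.m_closed by metis
qed

context comm_group begin

lemma pchar_one: assumes "pchar G H \<chi>" shows "\<chi> \<one> = 1"
proof -
  have s: "subgroup H G" and m: "\<chi> (\<one> \<otimes> \<one>) = \<chi> \<one> * \<chi> \<one>" and nz: "\<chi> \<one> \<noteq> 0"
    using assms subgroup.one_closed unfolding pchar_def by blast+
  then show ?thesis by simp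
qed

lemma pchar_pow: assumes "pchar G H \<chi>" "c \<in> H" shows "\<chi> (c [^] (n::nat)) = \<chi> c ^ n"
proof (induction n)
  case 0 then show ?case using pchar_one[OF assms(1)] by simp
next
  case (Suc n)
  have s: "subgroup H G" using assms unfolding pchar_def by blast
  have "c [^] n \<in> H" using s assms(2) subgroup_nat_pow_closed by blast
  then have "\<chi> (c [^] n \<otimes> c) = \<chi> (c [^] n) * \<chi> c" using assms unfolding pchar_def by blast
  moreover have "c [^] Suc n = c [^] n \<otimes> c" using assms s subgroup.subset by (simp add: nat_pow_Suc)
  ultimately show ?case using Suc by simp
qed

lemma least_props:
  assumes fin: "finite (carrier G)" and s: "subgroup H G" and b: "b \<in> carrier G" "b \<notin> H"
  defines "m \<equiv> LEAST n::nat. 0 < n \<and> b [^] n \<in> H"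
  shows "0 < m" "b [^] m \<in> H" "\<And>k. 0 < k \<Longrightarrow> k < m \<Longrightarrow> b [^] k \<notin> H" "1 < m"
proof -
  have "order G > 0" using fin unfolding order_def using b by (metis card_gt_0_iff empty_iff)
  moreover have "b [^] order G \<in> H" using pow_order_eq_1[OF b(1)] s subgroup.one_closed by simp
  ultimately have ex: "0 < order G \<and> b [^] order G \<in> H" by simp
  show "0 < m" "b [^] m \<in> H" using LeastI[of "\<lambda>n. 0 < n \<and> b [^] n \<in> H", OF ex] unfolding m_def by auto
  show "\<And>k. 0 < k \<Longrightarrow> k < m \<Longrightarrow> b [^] k \<notin> H" using not_less_Least unfolding m_def by blast
  have "b [^] (1::nat) = b" using b nat_pow_Suc[of b 0] by simp
  then show "1 < m" using \<open>0 < m\<close> \<open>b [^] m \<in> H\<close> b by (metis less_one nat_neq_iff)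
qed

lemma uniq_aux:
  fixes k k' m :: nat
  assumes s: "subgroup H G" and b: "b \<in> carrier G"
    and nb: "\<And>k. 0 < k \<Longrightarrow> k < m \<Longrightarrow> b [^] k \<notin> H"
    and h: "h \<in> H" "h' \<in> H" and k: "k \<le> k'" "k' < m"
    and eq: "h \<otimes> b [^] k = h' \<otimes> b [^] k'"
  shows "h = h' \<and> k = k'"
proof -
  have hc: "h \<in> carrier G" "h' \<in> carrier G" using h s subgroup.subset by auto
  have "b [^] k' = b [^] (k' - k) \<otimes> b [^] k" using k b by (simp add: nat_pow_mult)
  then have "h \<otimes> b [^] k = (h' \<otimes> b [^] (k' - k)) \<otimes> b [^] k" using eq hc b by (simp add: m_assoc)
  then have e2: "h = h' \<otimes> b [^] (k' - k)" using hc b by (meson m_closed nat_pow_closed right_cancel)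
  then have "inv h' \<otimes> h = b [^] (k' - k)" using hc b by (simp add: m_assoc[symmetric])
  moreover have "inv h' \<otimes> h \<in> H" using h s subgroup.m_inv_closed subgroup.m_closed by metis
  ultimately have "k' - k = 0" using nb k by (metis diff_le_self le_less_trans not_gr_zero)
  then have "k = k'" using k by simp
  then show ?thesis using e2 hc by simp
qed

lemma pchar_extend:
  assumes fin: "finite (carrier G)" and pc: "pchar G H \<chi>" and b: "b \<in> carrier G" "b \<notin> H"
  defines "m \<equiv> LEAST n::nat. 0 < n \<and> b [^] n \<in> H"
  assumes om: "\<omega> ^ m = \<chi> (b [^] m)"
  shows "\<exists>H' \<chi>'. pchar G H' \<chi>' \<and> H \<subset> H' \<and> (\<forall>x\<in>H. \<chi>' x = \<chi> x) \<and> \<chi>' b = \<omega> \<and> b \<in> H'"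
proof -
  have s: "subgroup H G" and chm: "\<And>x y. x \<in> H \<Longrightarrow> y \<in> H \<Longrightarrow> \<chi> (x \<otimes> y) = \<chi> x * \<chi> y"
    and nz: "\<And>x. x \<in> H \<Longrightarrow> \<chi> x \<noteq> 0" using pc unfolding pchar_def by auto
  have Hc: "\<And>x. x \<in> H \<Longrightarrow> x \<in> carrier G" using s subgroup.subset by auto
  note mp = least_props[OF fin s b, folded m_def]
  have bm: "b [^] m \<in> H" using mp by blast
  have onz: "\<omega> \<noteq> 0" using om nz[OF bm] mp(1) by (auto simp: zero_power)
  define H' where "H' = {h \<otimes> b [^] k | h k. h \<in> H \<and> k < m}"
  define \<chi>' where "\<chi>' x = (let p = (SOME p. fst p \<in> H \<and> snd p < m \<and> x = fst p \<otimes> b [^] snd p) in \<chi> (fst p) * \<omega> ^ snd p)" for x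
  have uniq: "h = h' \<and> k = k'" if "h \<in> H" "h' \<in> H" "k < m" "k' < m" "h \<otimes> b [^] k = h' \<otimes> b [^] k'" for h h' k k'
  proof (cases "k \<le> k'")
    case True then show ?thesis using uniq_aux[OF s b(1) mp(3)] that by blast
  next
    case False then show ?thesis using uniq_aux[OF s b(1) mp(3), where h=h' and h'=h and k=k' and k'=k] that by auto
  qed
  have val: "\<chi>' (h \<otimes> b [^] k) = \<chi> h * \<omega> ^ k" if "h \<in> H" "k < m" for h k
  proof -
    let ?P = "\<lambda>p. fst p \<in> H \<and> snd p < m \<and> h \<otimes> b [^] k = fst p \<otimes> b [^] snd p"
    have Pk: "?P (h, k)" using that by simp
    define p where "p = (SOME p. ?P p)"
    have Pp: "?P p" unfolding p_def using Pk by (rule someI)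
    have "fst p = h \<and> snd p = k" using uniq[of h "fst p" k "snd p"] Pp that by auto
    then show ?thesis unfolding \<chi>'_def Let_def p_def[symmetric] by simp
  qed
  have gen: "h \<otimes> b [^] n \<in> H' \<and> \<chi>' (h \<otimes> b [^] n) = \<chi> h * \<omega> ^ n" if "h \<in> H" for h n
  proof -
    define q r where "q = n div m" and "r = n mod m"
    have n: "n = m * q + r" unfolding q_def r_def by simp
    have r: "r < m" unfolding r_def using mp(1) by simp
    have "b [^] n = (b [^] m) [^] q \<otimes> b [^] r" using b n by (simp add: nat_pow_mult nat_pow_pow)
    then have e: "h \<otimes> b [^] n = (h \<otimes> (b [^] m) [^] q) \<otimes> b [^] r" using b Hc[OF that] by (simp add: m_assoc)
    have hq: "h \<otimes> (b [^] m) [^] q \<in> H" using that bm s subgroup_nat_pow_closed subgroup.m_closed by metis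
    have "h \<otimes> b [^] n \<in> H'" unfolding H'_def e using hq r by blast
    moreover have "\<chi>' (h \<otimes> b [^] n) = \<chi> h * \<omega> ^ n"
    proof -
      have "\<chi>' (h \<otimes> b [^] n) = \<chi> (h \<otimes> (b [^] m) [^] q) * \<omega> ^ r" unfolding e using val[OF hq r] .
      also have "\<dots> = \<chi> h * (\<omega> ^ m) ^ q * \<omega> ^ r"
        using chm[OF that subgroup_nat_pow_closed[OF s bm]] pchar_pow[OF pc bm] om by simp
      also have "\<dots> = \<chi> h * \<omega> ^ n" unfolding n by (simp add: power_add power_mult)
      finally show ?thesis .
    qed
    ultimately show ?thesis by blast
  qed
  have H'c: "H' \<subseteq> carrier G" unfolding H'_def using Hc b by auto
  have mulH': "x \<otimes> y \<in> H' \<and> \<chi>' (x \<otimes> y) = \<chi>' x * \<chi>' y" if xyH: "x \<in> H'" "y \<in> H'" for x y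
  proof -
    obtain h k h' k' where x: "x = h \<otimes> b [^] k" "h \<in> H" "k < m" and y: "y = h' \<otimes> b [^] k'" "h' \<in> H" "k' < m"
      using xyH unfolding H'_def by blast
    have "x \<otimes> y = (h \<otimes> h') \<otimes> b [^] (k + k')"
      using x y Hc b by (simp add: m_ac nat_pow_mult[symmetric])
    moreover have "h \<otimes> h' \<in> H" using x y s subgroup.m_closed by metis
    ultimately show ?thesis using gen[of "h \<otimes> h'" "k + k'"] val x y chm by (simp add: power_add)
  qed
  have sub: "subgroup H' G"
  proof (rule subgroupI)
    show "H' \<subseteq> carrier G" by (rule H'c)
    show "H' \<noteq> {}" using gen[OF subgroup.one_closed[OF s], of 0] by blast
    show "x \<otimes> y \<in> H'" if "x \<in> H'" "y \<in> H'" for x y using mulH' that by blast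
    show "inv x \<in> H'" if xH: "x \<in> H'" for x
    proof -
      obtain h k where x: "x = h \<otimes> b [^] k" "h \<in> H" "k < m" using xH unfolding H'_def by blast
      have h2: "inv h \<otimes> inv (b [^] m) \<in> H" using x bm s subgroup.m_closed subgroup.m_inv_closed by metis
      have "(inv h \<otimes> inv (b [^] m) \<otimes> b [^] (m - k)) \<otimes> x = \<one>"
      proof -
        have e1: "b [^] (m - k) \<otimes> b [^] k = b [^] m" using x b by (simp add: nat_pow_mult)
        have hc: "h \<in> carrier G" using Hc x by blast
        have "(inv h \<otimes> inv (b [^] m) \<otimes> b [^] (m - k)) \<otimes> (h \<otimes> b [^] k)
             = (inv h \<otimes> h) \<otimes> (inv (b [^] m) \<otimes> (b [^] (m - k) \<otimes> b [^] k))"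
        proof -
          have hi: "\<And>z. z \<in> carrier G \<Longrightarrow> h \<otimes> (inv h \<otimes> z) = z" using hc by (simp add: m_assoc[symmetric])
          show ?thesis using hc b by (simp add: m_ac hi)
        qed
        also have "\<dots> = \<one>" unfolding e1 using hc b by simp
        finally show ?thesis using x by simp
      qed
      then have "inv x = inv h \<otimes> inv (b [^] m) \<otimes> b [^] (m - k)"
        using x Hc b h2 by (intro inv_equality) auto
      then show ?thesis using gen[OF h2] by simp
    qed
  qed
  have pc': "pchar G H' \<chi>'" unfolding pchar_def
  proof (intro conjI ballI)
    show "subgroup H' G" by (rule sub)
    show "\<chi>' (x \<otimes> y) = \<chi>' x * \<chi>' y" if "x \<in> H'" "y \<in> H'" for x y using mulH' that by blast
    show "\<chi>' x \<noteq> 0" if "x \<in> H'" for x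
      using that val nz onz unfolding H'_def by auto
  qed
  have ext: "\<chi>' x = \<chi> x" "x \<in> H'" if "x \<in> H" for x
    using val[OF that mp(1)] gen[OF that, of 0] Hc[OF that] by auto
  have "b \<in> H'" "\<chi>' b = \<omega>"
    using gen[OF subgroup.one_closed[OF s], of 1] b pchar_one[OF pc] by auto
  then show ?thesis using pc' ext b by blast
qed

lemma sep_char:
  assumes fin: "finite (carrier G)" and a: "a \<in> carrier G" "a \<noteq> \<one>"
  shows "\<exists>\<chi>. pchar G (carrier G) \<chi> \<and> \<chi> a \<noteq> 1"
proof -
  let ?P = "\<lambda>H \<chi>. pchar G H \<chi> \<and> a \<in> H \<and> \<chi> a \<noteq> 1"
  have base: "\<exists>H \<chi>. ?P H \<chi>"
  proof -
    have pc0: "pchar G {\<one>} (\<lambda>_. 1)" unfolding pchar_def using triv_subgroup by simp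
    have an: "a \<notin> {\<one>}" using a by simp
    define m where "m = (LEAST n::nat. 0 < n \<and> a [^] n \<in> {\<one>})"
    have m1: "1 < m" using least_props(4)[OF fin triv_subgroup a(1) an] unfolding m_def .
    define \<omega> where "\<omega> = cis (2*pi / real m)"
    have om: "\<omega> ^ m = 1" unfolding \<omega>_def DeMoivre using m1 by simp
    have "\<omega> \<noteq> 1"
    proof
      assume "\<omega> = 1"
      then have "cos (2*pi/real m) = 1" unfolding \<omega>_def by (metis cis.sel(1) one_complex.sel(1))
      then obtain n :: int where n: "2*pi/real m = of_int n * 2 * pi" using cos_one_2pi_int by blast
      have "(2*pi) * (1 / real m) = (2*pi) * of_int n" using n by (simp add: algebra_simps)
      then have n1: "1 / real m = of_int n" using pi_gt_zero by (simp only: mult_cancel_left) simp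
      have "0 < 1 / real m" "1 / real m < 1" using m1 by auto
      then have "0 < n" "n < 1" unfolding n1 by simp_all
      then show False by simp
    qed
    obtain H' \<chi>' where "pchar G H' \<chi>'" "{\<one>} \<subset> H'" "\<chi>' a = \<omega>" "a \<in> H'"
      using pchar_extend[OF fin pc0 a(1) an, folded m_def, of \<omega>] om by auto
    then show ?thesis using \<open>\<omega> \<noteq> 1\<close> by blast
  qed
  have step: "\<forall>H \<chi>. ?P H \<chi> \<longrightarrow> card (carrier G) - card H \<le> k \<longrightarrow> (\<exists>\<chi>. ?P (carrier G) \<chi>)" for k
  proof (induction k)
    case 0
    show ?case
    proof (intro allI impI)
      fix H \<chi> assume P: "?P H \<chi>" and le: "card (carrier G) - card H \<le> 0"
      have "H \<subseteq> carrier G" using P subgroup.subset unfolding pchar_def by blast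
      then have "H = carrier G" using le fin by (metis card_seteq diff_is_0_eq le_zero_eq)
      then show "\<exists>\<chi>. ?P (carrier G) \<chi>" using P by blast
    qed
  next
    case (Suc k)
    show ?case
    proof (intro allI impI)
      fix H \<chi> assume P: "?P H \<chi>" and le: "card (carrier G) - card H \<le> Suc k"
      have Hs: "H \<subseteq> carrier G" and s: "subgroup H G" using P subgroup.subset unfolding pchar_def by blast+
      show "\<exists>\<chi>. ?P (carrier G) \<chi>"
      proof (cases "H = carrier G")
        case True then show ?thesis using P by blast
      next
        case False
        then obtain b where b: "b \<in> carrier G" "b \<notin> H" using Hs by blast
        define m where "m = (LEAST n::nat. 0 < n \<and> b [^] n \<in> H)"
        have m0: "0 < m" using least_props(1)[OF fin s b] unfolding m_def .
        obtain \<omega> where om: "\<omega> ^ m = \<chi> (b [^] m)" using complex_root_exists[OF m0] by blast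
        obtain H' \<chi>' where H': "pchar G H' \<chi>'" "H \<subset> H'" "\<forall>x\<in>H. \<chi>' x = \<chi> x"
          using pchar_extend[OF fin _ b, of \<chi>, folded m_def, OF _ om] P by blast
        have P': "?P H' \<chi>'" using H' P by auto
        have "H' \<subseteq> carrier G" using H'(1) subgroup.subset unfolding pchar_def by blast
        then have "card H < card H'" using H'(2) fin by (meson psubset_card_mono rev_finite_subset)
        then have "card (carrier G) - card H' \<le> k" using le by linarith
        then show ?thesis using Suc.IH P' by blast
      qed
    qed
  qed
  then show ?thesis using base by blast
qed

end

lemma (in group) main_aux:
  assumes fin: "finite (carrier G)" and nc: "\<not> comm_group G" and gK: "g \<in> K_grp G"
  shows "g \<in> derived G (carrier G)"
proof -
  let ?N = "derived G (carrier G)"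
  show "g \<in> ?N"
  proof (rule ccontr)
    assume gN: "g \<notin> ?N"
    have gc: "g \<in> carrier G" using gK unfolding K_grp_def by auto
    have nN: "?N \<lhd> G" by (rule derived_self_is_normal)
    interpret N: normal ?N G by (rule nN)
    interpret Q: comm_group "G Mod ?N" by (rule derived_quot_is_comm_group)
    have finQ: "finite (carrier (G Mod ?N))" using fin by (simp add: carrier_FactGroup)
    have ne: "?N #> g \<noteq> \<one>\<^bsub>G Mod ?N\<^esub>"
    proof
      assume "?N #> g = \<one>\<^bsub>G Mod ?N\<^esub>"
      then have "?N #> g = ?N" by simp
      moreover have "g \<in> ?N #> g" using rcos_self[OF gc normal_imp_subgroup[OF nN]] .
      ultimately show False using gN by simp
    qed
    have inQ: "?N #> g \<in> carrier (G Mod ?N)" by (simp add: carrier_FactGroup gc)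
    obtain \<chi> where \<chi>: "pchar (G Mod ?N) (carrier (G Mod ?N)) \<chi>" "\<chi> (?N #> g) \<noteq> 1"
      using Q.sep_char[OF finQ inQ ne] by blast
    have cm: "\<And>X Y. X \<in> carrier (G Mod ?N) \<Longrightarrow> Y \<in> carrier (G Mod ?N) \<Longrightarrow> \<chi> (X <#> Y) = \<chi> X * \<chi> Y"
      using \<chi>(1) unfolding pchar_def by simp
    define l where "l x = \<chi> (?N #> x)" for x
    have lmul: "l (x \<otimes> y) = l x * l y" if "x \<in> carrier G" "y \<in> carrier G" for x y
      unfolding l_def using cm[of "?N #> x" "?N #> y"] that N.rcos_sum[OF that]
      by (simp add: carrier_FactGroup)
    have l1: "l \<one> = 1"
    proof -
      have "?N #> \<one> = \<one>\<^bsub>G Mod ?N\<^esub>" using N.subset by simp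
      then show ?thesis unfolding l_def using Q.pchar_one[OF \<chi>(1)] by simp
    qed
    have lpow: "l (x [^] n) = l x ^ n" if "x \<in> carrier G" for x and n :: nat
    proof (induction n)
      case 0 then show ?case using l1 by simp
    next
      case (Suc n) then show ?case using lmul[of "x [^] n" x] that by (simp add: nat_pow_Suc)
    qed
    have labs: "cmod (l x) = 1" if "x \<in> carrier G" for x
    proof -
      have "l x ^ order G = 1" using lpow[OF that, of "order G"] pow_order_eq_1[OF that] l1 by simp
      then have "cmod (l x) ^ order G = 1" by (metis norm_one norm_power)
      moreover have "0 < order G" using fin order_gt_0_iff_finite by blast
      ultimately show ?thesis using power_eq_imp_eq_base[of "cmod (l x)" "order G" 1] by simp
    qed
    define \<rho> where "\<rho> x = mat 1 1 (\<lambda>_. l x)" for x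
    define ch where "ch = (\<lambda>x. if x \<in> carrier G then mat_trace (\<rho> x) else 0)"
    have isr: "is_rep G 1 \<rho>" unfolding is_rep_def
    proof (intro conjI ballI)
      show "\<rho> g \<in> carrier_mat 1 1" for g unfolding \<rho>_def by simp
      show "\<rho> \<one> = 1\<^sub>m 1" unfolding \<rho>_def by (rule eq_matI) (auto simp: l1)
      show "\<rho> (x \<otimes> y) = \<rho> x * \<rho> y" if "x \<in> carrier G" "y \<in> carrier G" for x y
        unfolding \<rho>_def by (rule eq_matI) (auto simp: scalar_prod_def lmul that)
    qed
    have irr: "irreducible_rep G 1 \<rho>" unfolding irreducible_rep_def
    proof (intro conjI allI impI isr)
      show "(0::nat) < 1" by simp
      fix W assume W: "invariant_subspace G 1 \<rho> W"
      have Wc: "W \<subseteq> carrier_vec 1" and sm: "\<And>c v. v \<in> W \<Longrightarrow> c \<cdot>\<^sub>v v \<in> W"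
        using W unfolding invariant_subspace_def by auto
      show "W = {0\<^sub>v 1} \<or> W = carrier_vec 1"
      proof (cases "W \<subseteq> {0\<^sub>v 1}")
        case True
        then show ?thesis using W unfolding invariant_subspace_def by auto
      next
        case False
        then obtain v where v: "v \<in> W" "v \<noteq> 0\<^sub>v 1" by blast
        have vc: "v \<in> carrier_vec 1" using v Wc by blast
        have v0: "v $ 0 \<noteq> 0"
        proof
          assume "v $ 0 = 0"
          then have "v = 0\<^sub>v 1" using vc by (intro eq_vecI) auto
          then show False using v by simp
        qed
        have "carrier_vec 1 \<subseteq> W"
        proof
          fix u :: "complex vec" assume u: "u \<in> carrier_vec 1"
          have "u = (u $ 0 / v $ 0) \<cdot>\<^sub>v v" using u vc v0 by (intro eq_vecI) auto
          then show "u \<in> W" using sm[OF v(1)] by metis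
        qed
        then show ?thesis using Wc by blast
      qed
    qed
    have chI: "ch \<in> Irr G" unfolding Irr_def ch_def using irr by blast
    have chv: "ch x = l x" if "x \<in> carrier G" for x
      using that unfolding ch_def mat_trace_def \<rho>_def by simp
    have cc: "char_center G ch = carrier G"
      unfolding char_center_def using chv labs l1 by auto
    have zc: "grp_center G \<subset> carrier G"
    proof -
      have "grp_center G \<subseteq> carrier G" unfolding grp_center_def by auto
      moreover have "grp_center G \<noteq> carrier G"
      proof
        assume "grp_center G = carrier G"
        then have "comm_group G" unfolding grp_center_def by (intro group_comm_groupI) auto
        then show False using nc by simp
      qed
      ultimately show ?thesis by blast
    qed
    have "g \<in> char_ker G ch" using gK chI cc zc unfolding K_grp_def by auto
    then have "l g = 1" using chv gc l1 unfolding char_ker_def by simp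
    then show False using \<chi>(2) unfolding l_def by simp
  qed
qed

theorem lemma2p1:
  fixes G :: "('a, 'b) monoid_scheme"
  assumes "group G" and "finite (carrier G)" and "\<not> comm_group G"
  shows "K_grp G \<subseteq> derived G (carrier G)"
  using group.main_aux[OF assms(1) assms(2) assms(3)] by blast

end
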